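(* For all integers $d_1,d_2\geq3$, $R_{d_1,d_2}(W_{d_1}\otimes W_{d_2})\leq 2d_1+2d_2-1$.
   Context: Identify $S^d\mathbb{C}^2$ with binary forms of degree $d$ in a basis $\{x,y\}$; $W_d=x^{d-1}y$. The partially symmetric rank $R_{d_1,d_2}(T)$ of $T\in S^{d_1}\mathbb{C}^2\otimes S^{d_2}\mathbb{C}^2$ is the minimal $r$ such that $T=\sum_{i=1}^r v_{i,1}^{\otimes d_1}\otimes v_{i,2}^{\otimes d_2}$ with $v_{i,j}\in\mathbb{C}^2$. *)

theory Defs
  imports Complex_Main
begin

text \<open>Binary forms of degree d in the basis x, y are represented by their
  polynomial functions on C^2 (over the infinite field C a form is determined
  by its values).  An element of S^d1 C^2 (x) S^d2 C^2 is a bihomogeneous form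
  of bidegree (d1,d2) in variables (x,y) and (u,w), represented as a function
  of four complex arguments.  The tensor v^(x d) for v = (a,b) is the form
  (a x + b y)^d.\<close>

type_synonym biform = "complex \<Rightarrow> complex \<Rightarrow> complex \<Rightarrow> complex \<Rightarrow> complex"

definition lin_form :: "complex \<times> complex \<Rightarrow> complex \<Rightarrow> complex \<Rightarrow> complex" where
  "lin_form v x y = fst v * x + snd v * y"

definition W :: "nat \<Rightarrow> complex \<Rightarrow> complex \<Rightarrow> complex" where
  "W d x y = x ^ (d - 1) * y"

definition tensor_forms ::
  "(complex \<Rightarrow> complex \<Rightarrow> complex) \<Rightarrow> (complex \<Rightarrow> complex \<Rightarrow> complex) \<Rightarrow> biform" where
  "tensor_forms f g = (\<lambda>x y u w. f x y * g u w)"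

definition ps_decomposition :: "nat \<Rightarrow> nat \<Rightarrow> biform \<Rightarrow> nat \<Rightarrow> bool" where
  "ps_decomposition d1 d2 T r \<longleftrightarrow>
     (\<exists>v1 v2 :: nat \<Rightarrow> complex \<times> complex.
        \<forall>x y u w. T x y u w =
          (\<Sum>i<r. lin_form (v1 i) x y ^ d1 * lin_form (v2 i) u w ^ d2))"

definition ps_rank :: "nat \<Rightarrow> nat \<Rightarrow> biform \<Rightarrow> nat" where
  "ps_rank d1 d2 T = (LEAST r. ps_decomposition d1 d2 T r)"

end

theory Submission
  imports Defs "HOL-Analysis.Analysis"
begin

lemma ex_croot:
  assumes "n > 0"
  shows "\<exists>k::complex. k ^ n = c"
proof (cases "c = 0")
  case True thus ?thesis using assms by (intro exI[of _ 0]) simp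
next
  case False
  have "exp (Ln c / of_nat n) ^ n = exp (of_nat n * (Ln c / of_nat n))"
    by (rule exp_of_nat_mult[symmetric])
  also have "\<dots> = c" using assms False by simp
  finally show ?thesis by blast
qed

definition zeta :: "nat \<Rightarrow> complex" where
  "zeta n = exp (2 * of_real pi * \<i> / of_nat n)"

lemma zeta_pow: "zeta n ^ k = exp (2 * of_real pi * \<i> * of_nat k / of_nat n)"
proof -
  have "zeta n ^ k = exp (of_nat k * (2 * of_real pi * \<i> / of_nat n))"
    unfolding zeta_def by (rule exp_of_nat_mult[symmetric])
  thus ?thesis by (simp add: field_simps)
qed

lemma zeta_pow_eq_1: "n \<ge> 1 \<Longrightarrow> zeta n ^ k = 1 \<longleftrightarrow> n dvd k"
  unfolding zeta_pow by (rule complex_root_unity_eq_1)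

lemma rou_sum:
  assumes "n \<ge> 1"
  shows "(\<Sum>j<n. zeta n ^ (j * e)) = (if n dvd e then of_nat n else 0)"
proof (cases "n dvd e")
  case True
  then have "\<And>j. zeta n ^ (j * e) = 1"
    using zeta_pow_eq_1[OF assms] by (simp add: dvd_mult)
  thus ?thesis using True by simp
next
  case False
  let ?w = "zeta n ^ e"
  have w1: "?w \<noteq> 1" using False zeta_pow_eq_1[OF assms] by simp
  have "(\<Sum>j<n. zeta n ^ (j * e)) = (\<Sum>j<n. ?w ^ j)"
    by (simp add: power_mult[symmetric] mult.commute)
  also have "\<dots> = (?w ^ n - 1) / (?w - 1)" using w1 by (rule geometric_sum)
  also have "?w ^ n = (zeta n ^ n) ^ e" by (simp add: power_mult[symmetric] mult.commute)
  also have "zeta n ^ n = 1" using zeta_pow_eq_1[OF assms] by simp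
  finally show ?thesis using False by simp
qed

lemma coeff_extr:
  fixes a :: "'k \<Rightarrow> complex" and e :: "'k \<Rightarrow> nat"
  assumes "finite K" "n \<ge> 3" "\<And>k. k \<in> K \<Longrightarrow> e k \<le> n + 1"
  shows "(\<Sum>j<n. zeta n ^ ((n - 2) * j) * (\<Sum>k\<in>K. a k * zeta n ^ (j * e k)))
         = of_nat n * (\<Sum>k\<in>{k\<in>K. e k = 2}. a k)"
proof -
  have "(\<Sum>j<n. zeta n ^ ((n - 2) * j) * (\<Sum>k\<in>K. a k * zeta n ^ (j * e k)))
      = (\<Sum>k\<in>K. a k * (\<Sum>j<n. zeta n ^ (j * (n - 2 + e k))))"
    unfolding sum_distrib_left sum_distrib_right
    by (subst sum.swap) (simp add: power_add[symmetric] algebra_simps)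
  also have "\<dots> = (\<Sum>k\<in>K. if e k = 2 then a k * of_nat n else 0)"
  proof (rule sum.cong[OF refl])
    fix k assume k: "k \<in> K"
    have "n dvd (n - 2 + e k) \<longleftrightarrow> e k = 2"
    proof
      assume d: "n dvd (n - 2 + e k)"
      have lt: "n - 2 + e k < 2 * n" using assms(2) assms(3)[OF k] by simp
      have pos: "n - 2 + e k > 0" using assms(2) by simp
      from d obtain q where q: "n - 2 + e k = n * q" by (auto elim: dvdE)
      have "q \<noteq> 0" using q pos by auto
      moreover have "q < 2" using q lt by (metis mult.commute mult_less_cancel2 not_less_zero)
      ultimately have "q = 1" by simp
      thus "e k = 2" using q assms(2) by simp
    next
      assume "e k = 2"
      then have "n - 2 + e k = n" using assms(2) by simp
      then show "n dvd (n - 2 + e k)" by simp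
    qed
    thus "a k * (\<Sum>j<n. zeta n ^ (j * (n - 2 + e k))) = (if e k = 2 then a k * of_nat n else 0)"
      using rou_sum[of n "n - 2 + e k"] assms(2) by auto
  qed
  also have "\<dots> = of_nat n * (\<Sum>k\<in>{k\<in>K. e k = 2}. a k)"
    using assms(1) by (simp add: sum.inter_filter sum_distrib_left mult.commute if_distrib cong: if_cong)
  finally show ?thesis .
qed

lemma ps_add:
  assumes "ps_decomposition d1 d2 T1 r1" "ps_decomposition d1 d2 T2 r2"
  shows "ps_decomposition d1 d2 (\<lambda>x y u w. T1 x y u w + T2 x y u w) (r1 + r2)"
proof -
  obtain a1 b1 where h1: "\<forall>x y u w. T1 x y u w =
          (\<Sum>i<r1. lin_form (a1 i) x y ^ d1 * lin_form (b1 i) u w ^ d2)"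
    using assms(1) unfolding ps_decomposition_def by blast
  obtain a2 b2 where h2: "\<forall>x y u w. T2 x y u w =
          (\<Sum>i<r2. lin_form (a2 i) x y ^ d1 * lin_form (b2 i) u w ^ d2)"
    using assms(2) unfolding ps_decomposition_def by blast
  define v1 where "v1 i = (if i < r1 then a1 i else a2 (i - r1))" for i
  define v2 where "v2 i = (if i < r1 then b1 i else b2 (i - r1))" for i
  let ?f = "\<lambda>x y u w i. lin_form (v1 i) x y ^ d1 * lin_form (v2 i) u w ^ d2"
  have "\<forall>x y u w. T1 x y u w + T2 x y u w = (\<Sum>i<r1 + r2. ?f x y u w i)"
  proof (intro allI)
    fix x y u w
    have "(\<Sum>i<r1 + r2. ?f x y u w i) = (\<Sum>i\<in>{0..<r1}. ?f x y u w i) + (\<Sum>i\<in>{r1..<r1 + r2}. ?f x y u w i)"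
      by (simp add: lessThan_atLeast0 sum.atLeastLessThan_concat)
    also have "(\<Sum>i\<in>{0..<r1}. ?f x y u w i) = T1 x y u w"
      using h1 by (simp add: v1_def v2_def lessThan_atLeast0)
    also have "(\<Sum>i\<in>{r1..<r1 + r2}. ?f x y u w i) = (\<Sum>i\<in>{0..<r2}. ?f x y u w (i + r1))"
      using sum.shift_bounds_nat_ivl[of "?f x y u w" 0 r1 r2] by (simp add: add.commute)
    also have "\<dots> = T2 x y u w"
      using h2 by (simp add: v1_def v2_def lessThan_atLeast0)
    finally show "T1 x y u w + T2 x y u w = (\<Sum>i<r1 + r2. ?f x y u w i)" by simp
  qed
  thus ?thesis unfolding ps_decomposition_def by blast
qed

lemma ps_scaled:
  assumes "d1 > 0"
  shows "ps_decomposition d1 d2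
    (\<lambda>x y u w. \<Sum>j<n. a j * lin_form (p j) x y ^ d1 * lin_form (q j) u w ^ d2) n"
proof -
  have "\<forall>j. \<exists>k. k ^ d1 = a j" using ex_croot[OF assms] by blast
  then obtain k where k: "\<And>j. k j ^ d1 = a j" by metis
  define v1 where "v1 j = (k j * fst (p j), k j * snd (p j))" for j
  have "lin_form (v1 j) x y ^ d1 = a j * lin_form (p j) x y ^ d1" for j x y
  proof -
    have "lin_form (v1 j) x y = k j * lin_form (p j) x y"
      by (simp add: v1_def lin_form_def algebra_simps)
    thus ?thesis by (simp add: power_mult_distrib k)
  qed
  thus ?thesis unfolding ps_decomposition_def
    by (intro exI[of _ v1] exI[of _ q]) simp
qed

lemma binom_s:
  "(x + s * y :: complex) ^ d = (\<Sum>i\<le>d. (of_nat (d choose i) * y ^ i * x ^ (d - i)) * s ^ i)"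
  by (subst add.commute, subst binomial_ring) (simp add: power_mult_distrib algebra_simps)

lemma identB:
  fixes d :: nat and x y :: complex
  assumes "d \<ge> 3"
  shows "(\<Sum>j<d. zeta d ^ ((d - 2) * j) * (x + zeta d ^ j * y) ^ d)
    = of_nat d * (of_nat (d choose 2) * y ^ 2 * x ^ (d - 2))"
proof -
  have "(\<Sum>j<d. zeta d ^ ((d - 2) * j) * (x + zeta d ^ j * y) ^ d)
      = (\<Sum>j<d. zeta d ^ ((d - 2) * j) *
          (\<Sum>i\<in>{..d}. (of_nat (d choose i) * y ^ i * x ^ (d - i)) * zeta d ^ (j * id i)))"
    by (simp add: binom_s power_mult)
  also have "\<dots> = of_nat d * (\<Sum>i\<in>{i\<in>{..d}. id i = 2}. of_nat (d choose i) * y ^ i * x ^ (d - i))"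
    by (rule coeff_extr) (use assms in auto)
  also have "{i\<in>{..d}. id i = 2} = {2}" using assms by auto
  finally show ?thesis by simp
qed

lemma identA:
  fixes d1 d2 :: nat and x y u w :: complex
  assumes "d1 \<ge> 3" "d2 \<ge> 3"
  defines "N \<equiv> d1 + d2 - 1"
  shows "(\<Sum>j<N. zeta N ^ ((N - 2) * j) * ((x + zeta N ^ j * y) ^ d1 * (u + zeta N ^ j * w) ^ d2))
    = of_nat N * (of_nat (d1 choose 2) * y ^ 2 * x ^ (d1 - 2) * u ^ d2
       + of_nat d1 * of_nat d2 * (x ^ (d1 - 1) * y) * (u ^ (d2 - 1) * w)
       + x ^ d1 * (of_nat (d2 choose 2) * w ^ 2 * u ^ (d2 - 2)))"
proof -
  define c where "c ik = (of_nat (d1 choose fst ik) * y ^ fst ik * x ^ (d1 - fst ik)) *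
     (of_nat (d2 choose snd ik) * w ^ snd ik * u ^ (d2 - snd ik))" for ik
  let ?K = "{..d1} \<times> {..d2}"
  have e: "(x + s * y) ^ d1 * (u + s * w) ^ d2 = (\<Sum>ik\<in>?K. c ik * s ^ (fst ik + snd ik))" for s
    unfolding binom_s sum_product sum.cartesian_product c_def
    by (rule sum.cong) (auto simp: power_add algebra_simps)
  have "(\<Sum>j<N. zeta N ^ ((N - 2) * j) * ((x + zeta N ^ j * y) ^ d1 * (u + zeta N ^ j * w) ^ d2))
     = (\<Sum>j<N. zeta N ^ ((N - 2) * j) * (\<Sum>ik\<in>?K. c ik * zeta N ^ (j * (fst ik + snd ik))))"
    by (simp add: e power_mult)
  also have "\<dots> = of_nat N * (\<Sum>ik\<in>{ik\<in>?K. fst ik + snd ik = 2}. c ik)"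
    by (rule coeff_extr) (use assms in auto)
  also have "{ik\<in>?K. fst ik + snd ik = 2} = {(2,0), (1,1), (0,2)}"
    using assms by auto
  also have "(\<Sum>ik\<in>{(2,0), (1,1), (0,2)}. c ik) = c (2,0) + c (1,1) + c (0,2)"
    by simp
  finally show ?thesis using assms by (simp add: c_def algebra_simps)
qed

theorem proposition3p5:
  fixes d1 d2 :: nat
  assumes "d1 \<ge> 3" and "d2 \<ge> 3"
  shows "ps_rank d1 d2 (tensor_forms (W d1) (W d2)) \<le> 2 * d1 + 2 * d2 - 1"
proof -
  define N where "N = d1 + d2 - 1"
  define a1 where "a1 j = zeta N ^ ((N - 2) * j) / (of_nat N * of_nat d1 * of_nat d2)" for j
  define a2 where "a2 j = - (zeta d1 ^ ((d1 - 2) * j)) / (of_nat d1 * of_nat d1 * of_nat d2)" for j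
  define a3 where "a3 j = - (zeta d2 ^ ((d2 - 2) * j)) / (of_nat d2 * of_nat d1 * of_nat d2)" for j
  define p1 where "p1 j = ((1::complex), zeta N ^ j)" for j
  define p2 where "p2 j = ((1::complex), zeta d1 ^ j)" for j
  define p3 where "p3 j = ((1::complex), zeta d2 ^ j)" for j
  define e0 where "e0 (j::nat) = ((1::complex), (0::complex))" for j
  have d1: "d1 > 0" using assms by simp
  let ?F1 = "\<lambda>x y u w. \<Sum>j<N. a1 j * lin_form (p1 j) x y ^ d1 * lin_form (p1 j) u w ^ d2"
  let ?F2 = "\<lambda>x y u w. \<Sum>j<d1. a2 j * lin_form (p2 j) x y ^ d1 * lin_form (e0 j) u w ^ d2"
  let ?F3 = "\<lambda>x y u w. \<Sum>j<d2. a3 j * lin_form (e0 j) x y ^ d1 * lin_form (p3 j) u w ^ d2"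
  have D: "ps_decomposition d1 d2 (\<lambda>x y u w. ?F1 x y u w + ?F2 x y u w + ?F3 x y u w) (N + d1 + d2)"
    by (intro ps_add ps_scaled d1)
  have eq: "tensor_forms (W d1) (W d2) = (\<lambda>x y u w. ?F1 x y u w + ?F2 x y u w + ?F3 x y u w)"
  proof (intro ext)
    fix x y u w :: complex
    have "N \<noteq> 0" "d1 \<noteq> 0" "d2 \<noteq> 0" using assms by (auto simp: N_def)
    hence nz: "(of_nat N :: complex) \<noteq> 0" "(of_nat d1 :: complex) \<noteq> 0" "(of_nat d2 :: complex) \<noteq> 0"
      by (simp_all only: of_nat_eq_0_iff not_False_eq_True)
    have f1: "?F1 x y u w = (\<Sum>j<N. zeta N ^ ((N - 2) * j) * ((x + zeta N ^ j * y) ^ d1 * (u + zeta N ^ j * w) ^ d2))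
               / (of_nat N * of_nat d1 * of_nat d2)"
      by (simp add: a1_def p1_def lin_form_def sum_divide_distrib algebra_simps)
    have f2: "?F2 x y u w = - (\<Sum>j<d1. zeta d1 ^ ((d1 - 2) * j) * (x + zeta d1 ^ j * y) ^ d1)
               * u ^ d2 / (of_nat d1 * of_nat d1 * of_nat d2)"
      by (simp add: a2_def p2_def e0_def lin_form_def sum_divide_distrib sum_distrib_left sum_negf algebra_simps)
    have f3: "?F3 x y u w = - (\<Sum>j<d2. zeta d2 ^ ((d2 - 2) * j) * (u + zeta d2 ^ j * w) ^ d2)
               * x ^ d1 / (of_nat d2 * of_nat d1 * of_nat d2)"
      by (simp add: a3_def p3_def e0_def lin_form_def sum_divide_distrib sum_distrib_left sum_negf algebra_simps)
    show "tensor_forms (W d1) (W d2) x y u w = ?F1 x y u w + ?F2 x y u w + ?F3 x y u w"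
      unfolding f1 f2 f3 identB[OF assms(1)] identB[OF assms(2)] identA[OF assms, folded N_def]
      using nz by (simp add: tensor_forms_def W_def field_simps)
  qed
  have "ps_decomposition d1 d2 (tensor_forms (W d1) (W d2)) (N + d1 + d2)"
    using D eq by simp
  hence "ps_rank d1 d2 (tensor_forms (W d1) (W d2)) \<le> N + d1 + d2"
    unfolding ps_rank_def by (rule Least_le)
  thus ?thesis using assms by (simp add: N_def)
qed

end
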